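(* Let $s,m$ be positive integers with $m$ odd, $n=sm$, and let $k$ be a positive integer with $t=\gcd(n,k)$ such that $\mathbb{F}_{2^t}\subseteq\mathbb{F}_{2^s}$ (i.e. $t\mid s$). Let $g(x)=x^{2^k+1}$ on $\mathbb{F}_{2^n}$. Then for all $a\in\mathbb{F}_{2^s}\setminus\{0\}$ and $b\in\mathbb{F}_{2^s}$, the equation $g(x+a)+g(x)=b$ has no solution $x\in\mathbb{F}_{2^n}\setminus\mathbb{F}_{2^s}$. *)

theory Defs
  imports Main
begin

text \<open>Inside a finite field F of order 2^n (s dividing n), the subfield F_{2^s} is the
set of fixed points of the s-th power of the Frobenius map x \<mapsto> x^2.\<close>
definition subfield_pow2 :: "nat \<Rightarrow> 'a::field set" where
  "subfield_pow2 s = {x. x ^ (2 ^ s) = x}"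

end

theory Submission
  imports Defs
begin

lemma ff_pow_card:
  fixes x :: "'a::{field,finite}"
  shows "x ^ card (UNIV :: 'a set) = x"
proof (cases "x = 0")
  case False
  have "x * (\<Prod>y\<in>UNIV-{0}. x * y) = x * x ^ (card (UNIV :: 'a set) - 1) * \<Prod>(UNIV-{0})"
    by (simp add: prod.distrib mult_ac)
  also have "x * x ^ (card (UNIV :: 'a set) - 1) = x ^ Suc (card (UNIV :: 'a set) - 1)"
    by (subst power_Suc) auto
  also have "Suc (card (UNIV :: 'a set) - 1) = card (UNIV :: 'a set)"
    using finite_UNIV_card_ge_0[where ?'a = 'a] by simp
  also have "(\<Prod>y\<in>UNIV-{0}. x * y) = (\<Prod>y\<in>UNIV-{0}. y)"
    by (rule prod.reindex_bij_witness[of _ "\<lambda>y. y / x" "\<lambda>y. x * y"]) (use False in auto)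
  finally show ?thesis
    by simp
qed (use finite_UNIV_card_ge_0[where ?'a = 'a] in auto)

lemma ff_char2:
  assumes "card (UNIV :: 'a::{field,finite} set) = 2 ^ n" and "n > 0"
  shows "(1::'a) + 1 = 0"
proof -
  have "(\<Sum>y\<in>(UNIV::'a set). 1 + y) = (\<Sum>y\<in>UNIV. y)"
    by (rule sum.reindex_bij_witness[of _ "\<lambda>y. y - 1" "\<lambda>y. 1 + y"]) auto
  moreover have "(\<Sum>y\<in>(UNIV::'a set). 1 + y) = of_nat (card (UNIV::'a set)) + (\<Sum>y\<in>UNIV. y)"
    by (simp add: sum.distrib)
  ultimately have "of_nat (card (UNIV::'a set)) = (0::'a)" by simp
  hence "(2::'a) ^ n = 0" using assms(1) by (metis of_nat_numeral of_nat_power)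
  hence "(2::'a) = 0" by simp
  thus ?thesis by (simp add: one_add_one)
qed

lemma frob_add:
  fixes x y :: "'a::field"
  assumes "(1::'a) + 1 = 0"
  shows "(x + y) ^ (2 ^ j) = x ^ (2 ^ j) + y ^ (2 ^ j)"
proof (induction j)
  case 0 then show ?case by simp
next
  case (Suc j)
  have two: "(2::'a) = 0" using assms by simp
  have "(x + y) ^ (2 ^ Suc j) = ((x + y) ^ (2 ^ j))^2"
    by (simp only: power_Suc2 power_mult)
  also have "\<dots> = (x ^ (2 ^ j) + y ^ (2 ^ j))^2" using Suc by simp
  also have "\<dots> = (x ^ (2 ^ j))^2 + (y ^ (2 ^ j))^2"
    by (simp add: power2_sum two)
  also have "\<dots> = x ^ (2 ^ Suc j) + y ^ (2 ^ Suc j)"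
    by (simp only: power_Suc2 power_mult)
  finally show ?case .
qed

lemma pow2_comp:
  fixes y :: "'a::monoid_mult"
  shows "(y ^ (2 ^ i)) ^ (2 ^ j) = y ^ (2 ^ (i + j))"
  by (simp add: power_mult[symmetric] power_add)

lemma fix_iter:
  fixes y :: "'a::monoid_mult"
  assumes "y ^ (2 ^ j) = y"
  shows "y ^ (2 ^ (j * v)) = y"
proof (induction v)
  case 0 then show ?case by simp
next
  case (Suc v)
  have "y ^ (2 ^ (j * Suc v)) = (y ^ (2 ^ j)) ^ (2 ^ (j * v))"
    by (simp add: pow2_comp)
  also have "\<dots> = y" using assms Suc by simp
  finally show ?case .
qed

theorem proposition2p5:
  fixes s m n k :: nat
  assumes card: "card (UNIV :: 'a::{field,finite} set) = 2 ^ n"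
    and "s > 0" and "m > 0" and "odd m" and "n = s * m"
    and "k > 0" and "gcd n k dvd s"
  shows "\<forall>a \<in> subfield_pow2 s - {0::'a}. \<forall>b \<in> subfield_pow2 s.
           \<not> (\<exists>x::'a. x \<notin> subfield_pow2 s \<and>
                (x + a) ^ (2 ^ k + 1) + x ^ (2 ^ k + 1) = b)"
proof (intro ballI notI)
  fix a b :: 'a
  assume a: "a \<in> subfield_pow2 s - {0}" and b: "b \<in> subfield_pow2 s"
  assume "\<exists>x::'a. x \<notin> subfield_pow2 s \<and> (x + a) ^ (2 ^ k + 1) + x ^ (2 ^ k + 1) = b"
  then obtain x where x: "x ^ (2 ^ s) \<noteq> x" and eq: "(x + a) ^ (2 ^ k + 1) + x ^ (2 ^ k + 1) = b"
    by (auto simp: subfield_pow2_def)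
  have a0: "a \<noteq> 0" and as: "a ^ (2 ^ s) = a" using a by (auto simp: subfield_pow2_def)
  have bs: "b ^ (2 ^ s) = b" using b by (auto simp: subfield_pow2_def)
  have n0: "n > 0" using assms by simp
  have c2: "(1::'a) + 1 = 0" using ff_char2[OF card n0] .
  have dbl: "u + u = 0" for u :: 'a
    by (metis c2 distrib_left mult_1_right mult_zero_right)
  have neg: "- u = u" for u :: 'a using dbl[of u] by (metis add_eq_0_iff)
  have cardpow: "y ^ (2 ^ n) = y" for y :: 'a using ff_pow_card[of y] card by simp
  define q :: nat where "q = 2 ^ k"
  define F where "F = (\<lambda>y::'a. a * y ^ q + a ^ q * y + a ^ (q + 1))"
  have Fx: "F x = b"
  proof -
    have "(x + a) ^ (q + 1) = (x ^ q + a ^ q) * (x + a)"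
      using frob_add[OF c2, of x a k] by (simp add: q_def)
    also have "\<dots> = x ^ (q+1) + (a * x ^ q + a ^ q * x + a ^ (q + 1))"
      by (simp add: algebra_simps)
    finally have "(x + a) ^ (q + 1) + x ^ (q+1) = F x"
      unfolding F_def by (metis add.commute add.left_commute dbl add_0)
    thus ?thesis using eq q_def by simp
  qed
  define X where "X = x ^ (2 ^ s)"
  have comm: "(y ^ q) ^ (2 ^ s) = (y ^ (2 ^ s)) ^ q" for y :: 'a
    by (metis power_mult mult.commute)
  have FX: "F X = b"
  proof -
    have e1: "(F x) ^ (2 ^ s) = (a * x ^ q) ^ (2 ^ s) + (a ^ q * x) ^ (2 ^ s) + (a ^ (q + 1)) ^ (2 ^ s)"
      unfolding F_def by (simp only: frob_add[OF c2])
    have e2: "(a * x ^ q) ^ (2 ^ s) = a * X ^ q"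
      unfolding X_def power_mult_distrib comm as ..
    have e3: "(a ^ q * x) ^ (2 ^ s) = a ^ q * X"
      unfolding X_def power_mult_distrib comm as ..
    have e4: "(a ^ (q + 1)) ^ (2 ^ s) = a ^ (q + 1)"
      by (metis as power_mult mult.commute)
    show ?thesis using Fx bs e1 e2 e3 e4 unfolding F_def by simp
  qed
  define w where "w = X + x"
  have wq: "w ^ q = X ^ q + x ^ q" unfolding w_def q_def using frob_add[OF c2] by simp
  have two: "(2::'a) = 0" using c2 by simp
  have "F X + F x = 0" using FX Fx dbl by simp
  moreover have "a * w ^ q + a ^ q * w = F X + F x"
    unfolding wq unfolding F_def w_def by (simp add: algebra_simps two)
  ultimately have "a * w ^ q + a ^ q * w = 0" by simp
  hence aw: "a * w ^ q = a ^ q * w" by (metis add_eq_0_iff neg)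
  define z where "z = w / a"
  have zq: "z ^ (2 ^ k) = z"
  proof -
    have "z ^ q = w ^ q / a ^ q" by (simp add: z_def power_divide)
    also have "w ^ q = a ^ q * w / a" using aw a0 by (simp add: field_simps)
    finally show ?thesis using a0 by (simp add: z_def q_def field_simps)
  qed
  have zn: "z ^ (2 ^ n) = z" by (rule cardpow)
  obtain u v where uv: "n * u = k * v + gcd n k" using bezout_nat[of n k] n0 by auto
  have zt: "z ^ (2 ^ gcd n k) = z"
  proof -
    have "z = z ^ (2 ^ (n * u))" using fix_iter[OF zn] by simp
    also have "\<dots> = (z ^ (2 ^ (k * v))) ^ (2 ^ gcd n k)" by (simp add: uv pow2_comp)
    also have "\<dots> = z ^ (2 ^ gcd n k)" using fix_iter[OF zq] by simp
    finally show ?thesis by simp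
  qed
  obtain r where r: "s = gcd n k * r" using assms(7) by blast
  have zs: "z ^ (2 ^ s) = z" using fix_iter[OF zt] r by simp
  have ws: "w ^ (2 ^ s) = w"
  proof -
    have "w = z * a" using a0 by (simp add: z_def)
    hence "w ^ (2 ^ s) = z ^ (2 ^ s) * a ^ (2 ^ s)" by (simp add: power_mult_distrib)
    thus ?thesis using zs as \<open>w = z * a\<close> by simp
  qed
  have Xw: "X = x + w" unfolding w_def by (metis add.commute add.left_commute dbl add_0_right)
  have XX: "X ^ (2 ^ s) = x"
    using Xw ws frob_add[OF c2, of x w s] X_def by (simp add: add.assoc dbl)
  have x2: "x ^ (2 ^ (s * 2)) = x"
    using XX X_def pow2_comp[of x s s] by (simp add: mult_2_right)
  obtain i where i: "m = 2 * i + 1" using assms(4) oddE by blast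
  have "x = x ^ (2 ^ n)" using cardpow by simp
  also have "\<dots> = (x ^ (2 ^ (s * 2 * i))) ^ (2 ^ s)"
    using pow2_comp[of x "s*2*i" s] assms(5) i by (simp add: algebra_simps)
  also have "\<dots> = X" using fix_iter[OF x2, of i] X_def by simp
  finally show False using x X_def by simp
qed

end
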